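(* Assume (A1), (A2) below. For any bounded measurable $\zeta:\Omega\to\mathbb R$, with $v(t)=P_t\zeta$ and $\bar v(t,x)=v(t)(\theta_x\omega)$, $$\frac{d}{dt}\mathrm{Var}_{\mathbb Q}(v(t))\lesssim-\sum_{e\in\mathbb Z^d:|e|=1}E_{\mathbb Q}\big[(\bar v(t,e)-\bar v(t,0))^2\big],$$ with implicit constant depending only on $d,\kappa$.
   Context: An environment is $\omega:\mathbb Z^d\to\{$positive-definite diagonal matrices$\}$, $\omega(x)=\mathrm{diag}[\omega_1(x),\dots,\omega_d(x)]$; $\Omega$ is the set of environments with law $\mathbb P$; $(\theta_x\omega)(\cdot)=\omega(x+\cdot)$. (A1) $\{\omega(x)\}$ i.i.d. under $\mathbb P$; (A2) $\omega/\mathrm{tr}\,\omega\ge2\kappa I$ a.s., $\kappa\in(0,\frac1{2d}]$. $(Y_t)$ is the continuous-time Markov process with generator $L_\omega u(x)=\sum_i\frac{\omega_i(x)}{2\mathrm{tr}\,\omega(x)}[u(x+e_i)+u(x-e_i)-2u(x)]$, $P_t\zeta(\omega)=E^0_\omega[\zeta(\theta_{Y_t}\omega)]$. $\mathbb Q$ is the unique probability measure on $\Omega$ equivalent to $\mathbb P$ that is invariant and ergodic for the environment viewed from the particle $\theta_{Y_t}\omega$. *)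

theory Defs
  imports "HOL-Probability.Probability"
begin

text \<open>Lattice sites Z^d are functions 'd => int with 'd a finite index type (dimension d = CARD('d)).
An environment assigns to each site the diagonal entries (omega_1(x),...,omega_d(x)).\<close>

type_synonym 'd site = "'d \<Rightarrow> int"
type_synonym 'd env = "'d site \<Rightarrow> ('d \<Rightarrow> real)"

definition origin :: "'d site" where
  "origin = (\<lambda>_. 0)"

definition unitvec :: "'d \<Rightarrow> 'd site" where
  "unitvec i = (\<lambda>j. if j = i then 1 else 0)"

definition shift :: "'d site \<Rightarrow> 'd env \<Rightarrow> 'd env" where
  "shift x \<omega> = (\<lambda>y. \<omega> (\<lambda>j. x j + y j))"

definition unit_sites :: "('d::finite) site set" where
  "unit_sites = {e. (\<Sum>j\<in>UNIV. (e j)^2) = 1}"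

text \<open>Positive definite diagonal matrices, represented by their diagonal.\<close>
definition pos_diag :: "('d::finite \<Rightarrow> real) set" where
  "pos_diag = {a. \<forall>i. 0 < a i}"

definition tr :: "('d::finite \<Rightarrow> real) \<Rightarrow> real" where
  "tr a = (\<Sum>j\<in>UNIV. a j)"

text \<open>Generator of the environment viewed from the particle:
  (L zeta)(omega) = L_omega zetabar (0), zetabar(x) = zeta(theta_x omega).\<close>
definition gen_env :: "(('d::finite) env \<Rightarrow> real) \<Rightarrow> 'd env \<Rightarrow> real" where
  "gen_env \<zeta> \<omega> = (\<Sum>i\<in>UNIV. \<omega> origin i / (2 * tr (\<omega> origin)) *
      (\<zeta> (shift (unitvec i) \<omega>) + \<zeta> (shift (\<lambda>j. - unitvec i j) \<omega>) - 2 * \<zeta> \<omega>))"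

text \<open>P_t zeta (omega) = E^0_omega[zeta(theta_{Y_t} omega)], i.e. the semigroup exp(t L)
  (L is a bounded operator on bounded functions, so the exponential series converges).\<close>
definition semigroup :: "real \<Rightarrow> (('d::finite) env \<Rightarrow> real) \<Rightarrow> 'd env \<Rightarrow> real" where
  "semigroup t \<zeta> \<omega> = (\<Sum>n. t ^ n / fact n * (gen_env ^^ n) \<zeta> \<omega>)"

text \<open>The i.i.d. law P on environments, with one-site marginal mu (assumption (A1)).\<close>
definition env_measure :: "('d::finite \<Rightarrow> real) measure \<Rightarrow> 'd env measure" where
  "env_measure \<mu> = PiM UNIV (\<lambda>_::'d site. \<mu>)"

definition bounded_fun :: "'a measure \<Rightarrow> ('a \<Rightarrow> real) \<Rightarrow> bool" where
  "bounded_fun M f \<longleftrightarrow> (\<exists>B. \<forall>x\<in>space M. \<bar>f x\<bar> \<le> B)"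

definition invariant_ergodic_equiv :: "('d::finite) env measure \<Rightarrow> 'd env measure \<Rightarrow> bool" where
  "invariant_ergodic_equiv P Q \<longleftrightarrow>
     prob_space Q \<and> sets Q = sets P \<and>
     absolutely_continuous P Q \<and> absolutely_continuous Q P \<and>
     (\<forall>f t. f \<in> borel_measurable Q \<longrightarrow> bounded_fun Q f \<longrightarrow> 0 \<le> t \<longrightarrow>
          (\<integral>\<omega>. semigroup t f \<omega> \<partial>Q) = (\<integral>\<omega>. f \<omega> \<partial>Q)) \<and>
     (\<forall>A\<in>sets Q. (\<forall>t\<ge>0. AE \<omega> in Q. semigroup t (indicator A) \<omega> = indicator A \<omega>)
          \<longrightarrow> measure Q A = 0 \<or> measure Q A = 1)"

end

theory Submission
  imports Defs
begin


definition envsp :: "('d::finite) env set" where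
  "envsp = {\<omega>. \<forall>x. \<omega> x \<in> pos_diag}"

lemma shift_envsp: "\<omega> \<in> envsp \<Longrightarrow> shift x \<omega> \<in> envsp"
  by (simp add: envsp_def shift_def)

lemma tr_pos: "\<omega> \<in> envsp \<Longrightarrow> 0 < tr (\<omega> x)"
proof -
  assume "\<omega> \<in> envsp"
  then have "\<forall>i. 0 < \<omega> x i" by (simp add: envsp_def pos_diag_def)
  then show ?thesis unfolding tr_def by (simp add: sum_pos)
qed

lemma coef_sum: "\<omega> \<in> envsp \<Longrightarrow> (\<Sum>i\<in>UNIV. \<omega> x i / (2 * tr (\<omega> x))) = 1/2"
proof -
  assume a: "\<omega> \<in> envsp"
  have "(\<Sum>i\<in>UNIV. \<omega> x i / (2 * tr (\<omega> x))) = (\<Sum>i\<in>UNIV. \<omega> x i) / (2 * tr (\<omega> x))"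
    by (simp add: sum_divide_distrib)
  also have "\<dots> = 1/2" using tr_pos[OF a, of x] by (simp add: tr_def)
  finally show ?thesis .
qed

lemma coef_pos: "\<omega> \<in> envsp \<Longrightarrow> 0 < \<omega> x i / (2 * tr (\<omega> x))"
  using tr_pos[of \<omega> x] by (simp add: envsp_def pos_diag_def)

lemma gen_bound:
  assumes "\<And>\<omega>. \<omega> \<in> envsp \<Longrightarrow> \<bar>f \<omega>\<bar> \<le> B" "\<omega> \<in> envsp"
  shows "\<bar>gen_env f \<omega>\<bar> \<le> 2 * B"
proof -
  let ?c = "\<lambda>i. \<omega> origin i / (2 * tr (\<omega> origin))"
  have "\<bar>gen_env f \<omega>\<bar> \<le> (\<Sum>i\<in>UNIV. \<bar>?c i * (f (shift (unitvec i) \<omega>) + f (shift (\<lambda>j. - unitvec i j) \<omega>) - 2 * f \<omega>)\<bar>)"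
    unfolding gen_env_def by (rule sum_abs)
  also have "\<dots> \<le> (\<Sum>i\<in>UNIV. ?c i * (4 * B))"
  proof (rule sum_mono)
    fix i
    have c: "0 < ?c i" by (rule coef_pos[OF assms(2)])
    have "\<bar>f (shift (unitvec i) \<omega>) + f (shift (\<lambda>j. - unitvec i j) \<omega>) - 2 * f \<omega>\<bar> \<le> 4 * B"
      using assms(1)[OF shift_envsp[OF assms(2), of "unitvec i"]]
        assms(1)[OF shift_envsp[OF assms(2), of "\<lambda>j. - unitvec i j"]] assms(1)[OF assms(2)]
      by linarith
    then show "\<bar>?c i * (f (shift (unitvec i) \<omega>) + f (shift (\<lambda>j. - unitvec i j) \<omega>) - 2 * f \<omega>)\<bar> \<le> ?c i * (4 * B)"
      unfolding abs_mult abs_of_pos[OF c] using c by (intro mult_left_mono) auto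
  qed
  also have "\<dots> = (\<Sum>i\<in>UNIV. ?c i) * (4 * B)" by (rule sum_distrib_right[symmetric])
  also have "\<dots> = 2 * B" unfolding coef_sum[OF assms(2)] by simp
  finally show ?thesis .
qed

lemma pow_bound:
  assumes "\<And>\<omega>. \<omega> \<in> envsp \<Longrightarrow> \<bar>f \<omega>\<bar> \<le> B"
  shows "\<omega> \<in> envsp \<Longrightarrow> \<bar>(gen_env ^^ n) f \<omega>\<bar> \<le> 2^n * B"
proof (induction n arbitrary: \<omega>)
  case 0 then show ?case using assms by simp
next
  case (Suc n)
  have "\<bar>gen_env ((gen_env ^^ n) f) \<omega>\<bar> \<le> 2 * (2^n * B)"
    by (rule gen_bound[OF Suc.IH Suc.prems])
  then show ?case by simp
qed


definition ca :: "(('d::finite) env \<Rightarrow> real) \<Rightarrow> 'd env \<Rightarrow> nat \<Rightarrow> real" where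
  "ca f \<omega> n = (gen_env ^^ n) f \<omega> / fact n"

lemma sg_eq: "semigroup s f \<omega> = (\<Sum>n. ca f \<omega> n * s^n)"
  unfolding semigroup_def ca_def by (simp add: mult.commute)

lemma exp_sums': "(\<lambda>n. inverse (fact n) * x^n) sums exp (x::real)"
  using exp_converges[of x] by (simp add: divide_inverse mult.commute)

lemma ca_bound:
  assumes "\<And>\<omega>. \<omega> \<in> envsp \<Longrightarrow> \<bar>f \<omega>\<bar> \<le> B" "\<omega> \<in> envsp"
  shows "\<bar>ca f \<omega> n * s^n\<bar> \<le> B * (inverse (fact n) * (2 * \<bar>s\<bar>)^n)"
proof -
  have "\<bar>ca f \<omega> n * s^n\<bar> = \<bar>(gen_env ^^ n) f \<omega>\<bar> * (inverse (fact n) * \<bar>s\<bar>^n)"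
    by (simp add: ca_def abs_mult power_abs divide_inverse)
  also have "\<dots> \<le> (2^n * B) * (inverse (fact n) * \<bar>s\<bar>^n)"
    by (rule mult_right_mono[OF pow_bound[OF assms]]) (auto intro!: mult_nonneg_nonneg)
  also have "\<dots> = B * (inverse (fact n) * (2 * \<bar>s\<bar>)^n)"
    by (simp add: power_mult_distrib)
  finally show ?thesis .
qed

lemma ca_summable:
  assumes "\<And>\<omega>. \<omega> \<in> envsp \<Longrightarrow> \<bar>f \<omega>\<bar> \<le> B" "\<omega> \<in> envsp"
  shows "summable (\<lambda>n. ca f \<omega> n * s^n)"
proof (rule summable_comparison_test[where g="\<lambda>n. B * (inverse (fact n) * (2 * \<bar>s\<bar>)^n)"])
  show "\<exists>N. \<forall>n\<ge>N. norm (ca f \<omega> n * s ^ n) \<le> B * (inverse (fact n) * (2 * \<bar>s\<bar>) ^ n)"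
    using ca_bound[OF assms] by auto
  show "summable (\<lambda>n. B * (inverse (fact n) * (2 * \<bar>s\<bar>) ^ n))"
    by (intro summable_mult summable_exp)
qed

lemma sg_bound:
  assumes "\<And>\<omega>. \<omega> \<in> envsp \<Longrightarrow> \<bar>f \<omega>\<bar> \<le> B" "\<omega> \<in> envsp"
  shows "\<bar>semigroup s f \<omega>\<bar> \<le> B * exp (2 * \<bar>s\<bar>)"
proof -
  let ?g = "\<lambda>n. B * (inverse (fact n) * (2 * \<bar>s\<bar>)^n)"
  have gs: "?g sums (B * exp (2 * \<bar>s\<bar>))" by (intro sums_mult exp_sums')
  have s1: "summable (\<lambda>n. ca f \<omega> n * s^n)" by (rule ca_summable[OF assms])
  have "(\<Sum>n. ca f \<omega> n * s^n) \<le> suminf ?g"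
    using ca_bound[OF assms] by (intro suminf_le s1 sums_summable[OF gs]) (auto simp: abs_le_iff)
  moreover have "(\<Sum>n. - (ca f \<omega> n * s^n)) \<le> suminf ?g"
    using ca_bound[OF assms] by (intro suminf_le summable_minus s1 sums_summable[OF gs]) (auto simp: abs_le_iff)
  ultimately show ?thesis using sums_unique[OF gs] suminf_minus[OF s1] unfolding sg_eq by linarith
qed

lemma sg_zero: "semigroup 0 f \<omega> = f \<omega>"
  unfolding sg_eq powser_zero by (simp add: ca_def)

lemma sg_deriv:
  assumes "\<And>\<omega>. \<omega> \<in> envsp \<Longrightarrow> \<bar>f \<omega>\<bar> \<le> B" "\<omega> \<in> envsp"
  shows "((\<lambda>s. semigroup s f \<omega>) has_real_derivative semigroup s (gen_env f) \<omega>) (at s)"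
proof -
  have d: "diffs (ca f \<omega>) = ca (gen_env f) \<omega>"
  proof
    fix n
    have "(gen_env ^^ Suc n) f \<omega> = (gen_env ^^ n) (gen_env f) \<omega>"
      by (simp add: funpow_swap1)
    moreover have "\<And>k F Y::real. k \<noteq> 0 \<Longrightarrow> F \<noteq> 0 \<Longrightarrow> k * (Y / (k*F)) = Y/F" by simp
    ultimately show "diffs (ca f \<omega>) n = ca (gen_env f) \<omega> n"
      unfolding diffs_def ca_def fact_Suc by (metis of_nat_0_eq_iff fact_nonzero nat.distinct(1) of_nat_mult)
  qed
  show ?thesis unfolding sg_eq d[symmetric]
    by (rule termdiffs_strong_converges_everywhere) (rule ca_summable[OF assms])
qed

lemma sg_commute:
  assumes B: "\<And>\<omega>. \<omega> \<in> envsp \<Longrightarrow> \<bar>f \<omega>\<bar> \<le> B" and w: "\<omega> \<in> envsp"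
  shows "gen_env (semigroup s f) \<omega> = semigroup s (gen_env f) \<omega>"
proof -
  let ?c = "\<lambda>i. \<omega> origin i / (2 * tr (\<omega> origin))"
  let ?p = "\<lambda>i. shift (unitvec i) \<omega>" and ?m = "\<lambda>i. shift (\<lambda>j. - unitvec i j) \<omega>"
  have sm: "\<And>\<omega>'. \<omega>' \<in> envsp \<Longrightarrow> (\<lambda>n. ca f \<omega>' n * s^n) sums semigroup s f \<omega>'"
    unfolding sg_eq by (rule summable_sums[OF ca_summable[OF B]])
  have "(\<lambda>n. \<Sum>i\<in>UNIV. ?c i * (ca f (?p i) n * s^n + ca f (?m i) n * s^n - 2 * (ca f \<omega> n * s^n)))
     sums (\<Sum>i\<in>UNIV. ?c i * (semigroup s f (?p i) + semigroup s f (?m i) - 2 * semigroup s f \<omega>))"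
    using w by (intro sums_sum sums_mult sums_diff sums_add sm shift_envsp)
  moreover have "(\<lambda>n. \<Sum>i\<in>UNIV. ?c i * (ca f (?p i) n * s^n + ca f (?m i) n * s^n - 2 * (ca f \<omega> n * s^n)))
     = (\<lambda>n. ca (gen_env f) \<omega> n * s^n)"
  proof
    fix n
    have "ca (gen_env f) \<omega> n * s^n = gen_env ((gen_env ^^ n) f) \<omega> / fact n * s^n"
      by (simp add: ca_def funpow_swap1)
    also have "\<dots> = (\<Sum>i\<in>UNIV. ?c i * (ca f (?p i) n * s^n + ca f (?m i) n * s^n - 2 * (ca f \<omega> n * s^n)))"
      unfolding gen_env_def[of "(gen_env ^^ n) f"] ca_def sum_divide_distrib sum_distrib_right
      using tr_pos[OF w, of origin] by (intro sum.cong refl) (simp add: field_simps)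
    finally show "(\<Sum>i\<in>UNIV. ?c i * (ca f (?p i) n * s^n + ca f (?m i) n * s^n - 2 * (ca f \<omega> n * s^n))) = ca (gen_env f) \<omega> n * s^n" ..
  qed
  ultimately have "(\<lambda>n. ca (gen_env f) \<omega> n * s^n) sums gen_env (semigroup s f) \<omega>"
    unfolding gen_env_def by simp
  then show ?thesis unfolding sg_eq by (rule sums_unique)
qed


lemma taylor2:
  fixes f f' f'' :: "real \<Rightarrow> real"
  assumes d1: "\<And>x. (f has_real_derivative f' x) (at x)"
    and d2: "\<And>x. (f' has_real_derivative f'' x) (at x)"
    and K: "\<And>x. a \<le> x \<Longrightarrow> x \<le> b \<Longrightarrow> \<bar>f'' x\<bar> \<le> K"
    and s: "a \<le> s" "s \<le> b" and t: "a \<le> t" "t \<le> b"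
  shows "\<bar>f s - f t - (s - t) * f' t\<bar> \<le> K * (s - t)^2"
proof (cases "s = t")
  case True then show ?thesis by simp
next
  case False
  show ?thesis
  proof (cases "t < s")
    case True
    obtain z where z: "t < z" "z < s" "f s - f t = (s - t) * f' z"
      using MVT2[OF True d1] by blast
    obtain y where y: "t < y" "y < z" "f' z - f' t = (z - t) * f'' y"
      using MVT2[OF z(1) d2] by blast
    have "\<bar>f'' y\<bar> \<le> K" using K y z s t by auto
    then have "(z - t) * \<bar>f'' y\<bar> \<le> (s - t) * K"
      using y z by (intro mult_mono) auto
    then have "\<bar>f' z - f' t\<bar> \<le> K * (s - t)"
      using y z unfolding y(3) abs_mult by (simp add: mult.commute)
    then have "\<bar>s - t\<bar> * \<bar>f' z - f' t\<bar> \<le> (s - t) * (K * (s - t))"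
      using True by (simp add: mult_left_mono)
    moreover have "f s - f t - (s - t) * f' t = (s - t) * (f' z - f' t)"
      using z(3) by (simp add: algebra_simps)
    ultimately have "\<bar>f s - f t - (s - t) * f' t\<bar> \<le> (s - t) * (K * (s - t))" by (simp only: abs_mult)
    then show ?thesis by (simp add: power2_eq_square algebra_simps)
  next
    case False
    then have ts: "s < t" using \<open>s \<noteq> t\<close> by simp
    obtain z where z: "s < z" "z < t" "f t - f s = (t - s) * f' z"
      using MVT2[OF ts d1] by blast
    obtain y where y: "z < y" "y < t" "f' t - f' z = (t - z) * f'' y"
      using MVT2[OF z(2) d2] by blast
    have "\<bar>f'' y\<bar> \<le> K" using K y z s t by auto
    then have "(t - z) * \<bar>f'' y\<bar> \<le> (t - s) * K"
      using y z by (intro mult_mono) auto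
    then have "\<bar>f' t - f' z\<bar> \<le> K * (t - s)"
      using y z unfolding y(3) abs_mult by (simp add: mult.commute)
    then have "\<bar>t - s\<bar> * \<bar>f' t - f' z\<bar> \<le> (t - s) * (K * (t - s))"
      using ts by (simp add: mult_left_mono)
    moreover have "f s - f t - (s - t) * f' t = (t - s) * (f' t - f' z)"
      using z(3) by (simp add: algebra_simps)
    ultimately have "\<bar>f s - f t - (s - t) * f' t\<bar> \<le> (t - s) * (K * (t - s))" by (simp only: abs_mult)
    then show ?thesis by (simp add: power2_eq_square algebra_simps)
  qed
qed

lemma deriv_from_quad:
  fixes G :: "real \<Rightarrow> real"
  assumes "\<And>s. s \<in> T \<Longrightarrow> \<bar>s - t\<bar> < 1 \<Longrightarrow> \<bar>G s - G t - (s - t) * D\<bar> \<le> K * (s - t)^2"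
  shows "(G has_real_derivative D) (at t within T)"
proof -
  have "((\<lambda>y. (G y - G t) / (y - t) - D) \<longlongrightarrow> 0) (at t within T)"
  proof (rule Lim_null_comparison)
    have "\<forall>y\<in>T. 0 < dist y t \<and> dist y t < 1 \<longrightarrow> norm ((G y - G t) / (y - t) - D) \<le> \<bar>K\<bar> * \<bar>y - t\<bar>"
    proof (intro ballI impI)
      fix y assume y: "y \<in> T" "0 < dist y t \<and> dist y t < 1"
      then have ne: "y - t \<noteq> 0" and lt: "\<bar>y - t\<bar> < 1" by (auto simp: dist_real_def)
      have "(G y - G t) / (y - t) - D = (G y - G t - (y - t) * D) / (y - t)"
        using ne by (simp add: field_simps)
      then have "norm ((G y - G t) / (y - t) - D) = \<bar>G y - G t - (y - t) * D\<bar> / \<bar>y - t\<bar>"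
        by simp
      also have "\<dots> \<le> K * (y - t)^2 / \<bar>y - t\<bar>"
        using assms[OF y(1) lt] by (simp add: divide_right_mono)
      also have "\<dots> = K * (\<bar>y - t\<bar> * \<bar>y - t\<bar>) / \<bar>y - t\<bar>" by (simp add: power2_eq_square abs_mult_self_eq)
      also have "\<dots> = K * \<bar>y - t\<bar>"
      proof -
        have g: "\<And>a::real. a \<noteq> 0 \<Longrightarrow> K*(a*a)/a = K*a" by simp
        show ?thesis by (rule g) (use ne in simp)
      qed
      also have "\<dots> \<le> \<bar>K\<bar> * \<bar>y - t\<bar>" by (simp add: mult_right_mono)
      finally show "norm ((G y - G t) / (y - t) - D) \<le> \<bar>K\<bar> * \<bar>y - t\<bar>" .
    qed
    then show "\<forall>\<^sub>F y in at t within T. norm ((G y - G t) / (y - t) - D) \<le> \<bar>K\<bar> * \<bar>y - t\<bar>"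
      unfolding eventually_at by (intro exI[of _ 1]) auto
    have "((\<lambda>y. \<bar>K\<bar> * \<bar>y - t\<bar>) \<longlongrightarrow> \<bar>K\<bar> * \<bar>t - t\<bar>) (at t within T)"
      by (intro tendsto_intros)
    then show "((\<lambda>y. \<bar>K\<bar> * \<bar>y - t\<bar>) \<longlongrightarrow> 0) (at t within T)" by simp
  qed
  then have "((\<lambda>y. (G y - G t) / (y - t)) \<longlongrightarrow> D) (at t within T)"
    by (simp add: LIM_zero_iff)
  then show ?thesis by (simp add: has_field_derivative_iff)
qed


lemma space_env:
  assumes "sets \<mu> = sets (restrict_space borel pos_diag)"
  shows "space (env_measure \<mu>) = envsp"
proof -
  have "space \<mu> = pos_diag"
    using sets_eq_imp_space_eq[OF assms] by (simp add: space_restrict_space)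
  then show ?thesis
    by (auto simp: env_measure_def space_PiM envsp_def PiE_def extensional_def)
qed

lemma comp_meas:
  fixes \<mu> :: "('d::finite \<Rightarrow> real) measure"
  assumes "sets \<mu> = sets (restrict_space borel pos_diag)"
  shows "(\<lambda>\<omega>. \<omega> x i) \<in> borel_measurable (env_measure \<mu>)"
proof -
  have a: "(\<lambda>\<omega>. \<omega> x) \<in> measurable (env_measure \<mu>) \<mu>"
    unfolding env_measure_def by (rule measurable_component_singleton) simp
  have "(\<lambda>a::('d \<Rightarrow> real). a i) \<in> borel_measurable borel" by measurable
  then have "(\<lambda>a::('d \<Rightarrow> real). a i) \<in> borel_measurable (restrict_space borel pos_diag)"
    by (rule measurable_restrict_space1)
  then have "(\<lambda>a::('d \<Rightarrow> real). a i) \<in> borel_measurable \<mu>"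
    using measurable_cong_sets[OF assms refl, of "borel :: real measure"] by simp
  from measurable_compose[OF a this] show ?thesis .
qed

lemma shift_meas:
  assumes "sets \<mu> = sets (restrict_space borel pos_diag)"
  shows "shift x \<in> measurable (env_measure \<mu>) (env_measure \<mu>)"
proof -
  have "(\<lambda>\<omega> y. \<omega> (\<lambda>j. x j + y j)) \<in> measurable (env_measure \<mu>) (env_measure \<mu>)"
    unfolding env_measure_def
  proof (rule measurable_PiM_single')
    fix y :: "'a site"
    show "(\<lambda>\<omega>. \<omega> (\<lambda>j. x j + y j)) \<in> measurable (Pi\<^sub>M UNIV (\<lambda>_. \<mu>)) \<mu>"
      by (rule measurable_component_singleton) simp
  next
    show "(\<lambda>\<omega> y. \<omega> (\<lambda>j. x j + y j)) \<in> space (Pi\<^sub>M UNIV (\<lambda>_. \<mu>)) \<rightarrow> (\<Pi>\<^sub>E y\<in>UNIV. space \<mu>)"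
      by (auto simp: space_PiM PiE_def)
  qed
  then show ?thesis unfolding shift_def[abs_def] .
qed

lemma gen_meas:
  assumes S: "sets \<mu> = sets (restrict_space borel pos_diag)"
    and f: "f \<in> borel_measurable (env_measure \<mu>)"
  shows "gen_env f \<in> borel_measurable (env_measure \<mu>)"
proof -
  note c = comp_meas[OF S]
  have fs: "\<And>x. (\<lambda>\<omega>. f (shift x \<omega>)) \<in> borel_measurable (env_measure \<mu>)"
    using measurable_compose[OF shift_meas[OF S] f] by simp
  have tr: "(\<lambda>\<omega>. tr (\<omega> origin)) \<in> borel_measurable (env_measure \<mu>)"
    unfolding tr_def using c by (intro borel_measurable_sum) auto
  show ?thesis unfolding gen_env_def[abs_def]
    using c tr fs f by (intro borel_measurable_sum borel_measurable_times borel_measurable_divide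
        borel_measurable_add borel_measurable_diff borel_measurable_const) auto
qed

lemma pow_meas:
  assumes S: "sets \<mu> = sets (restrict_space borel pos_diag)"
    and f: "f \<in> borel_measurable (env_measure \<mu>)"
  shows "(gen_env ^^ n) f \<in> borel_measurable (env_measure \<mu>)"
  by (induction n) (auto intro: gen_meas[OF S] f)

lemma sg_meas:
  assumes S: "sets \<mu> = sets (restrict_space borel pos_diag)"
    and f: "f \<in> borel_measurable (env_measure \<mu>)"
    and B: "\<And>\<omega>. \<omega> \<in> envsp \<Longrightarrow> \<bar>f \<omega>\<bar> \<le> B"
  shows "semigroup s f \<in> borel_measurable (env_measure \<mu>)"
proof (rule borel_measurable_LIMSEQ_metric[where f="\<lambda>N \<omega>. \<Sum>n<N. ca f \<omega> n * s^n"])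
  fix N
  show "(\<lambda>\<omega>. \<Sum>n<N. ca f \<omega> n * s^n) \<in> borel_measurable (env_measure \<mu>)"
    unfolding ca_def using pow_meas[OF S f]
    by (intro borel_measurable_sum borel_measurable_times borel_measurable_divide borel_measurable_const) auto
next
  fix \<omega> assume "\<omega> \<in> space (env_measure \<mu>)"
  then have "\<omega> \<in> envsp" using space_env[OF S] by simp
  then show "(\<lambda>N. \<Sum>n<N. ca f \<omega> n * s^n) \<longlonglongrightarrow> semigroup s f \<omega>"
    unfolding sg_eq by (intro summable_LIMSEQ ca_summable[OF B])
qed


lemma unit_sites_char:
  "(e::('d::finite) site) \<in> unit_sites \<longleftrightarrow> (\<exists>i. e = unitvec i \<or> e = (\<lambda>j. - unitvec i j))"
proof
  assume "e \<in> unit_sites"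
  then have s1: "(\<Sum>j\<in>UNIV. (e j)^2) = 1" by (simp add: unit_sites_def)
  have "\<exists>i. e i \<noteq> 0"
  proof (rule ccontr)
    assume "\<not> (\<exists>i. e i \<noteq> 0)"
    then have "(\<Sum>j\<in>UNIV. (e j)^2) = 0" by simp
    with s1 show False by simp
  qed
  then obtain i where i: "e i \<noteq> 0" by blast
  have split: "(\<Sum>j\<in>UNIV. (e j)^2) = (e i)^2 + (\<Sum>j\<in>UNIV - {i}. (e j)^2)"
    by (simp add: sum.remove)
  have nn: "0 \<le> (\<Sum>j\<in>UNIV - {i}. (e j)^2)" by (simp add: sum_nonneg)
  have ge: "1 \<le> (e i)^2" using i
    by (metis int_one_le_iff_zero_less zero_less_power2)
  have ei: "(e i)^2 = 1" and rest: "(\<Sum>j\<in>UNIV - {i}. (e j)^2) = 0"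
    using s1 split nn ge by linarith+
  have z: "\<forall>j\<in>UNIV - {i}. (e j)^2 = 0"
    using rest by (subst (asm) sum_nonneg_eq_0_iff) auto
  have "e i = 1 \<or> e i = -1" using ei
    by (metis power2_eq_1_iff)
  then have "e = unitvec i \<or> e = (\<lambda>j. - unitvec i j)"
    using z by (auto simp: unitvec_def fun_eq_iff)
  then show "\<exists>i. e = unitvec i \<or> e = (\<lambda>j. - unitvec i j)" by blast
next
  assume "\<exists>i. e = unitvec i \<or> e = (\<lambda>j. - unitvec i j)"
  then obtain i where "e = unitvec i \<or> e = (\<lambda>j. - unitvec i j)" by blast
  moreover have "\<And>j. (unitvec i j)^2 = (if j = i then 1 else (0::int))"
    by (simp add: unitvec_def)
  ultimately show "e \<in> unit_sites"
    by (auto simp: unit_sites_def power2_minus)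
qed

lemma sum_unit_sites:
  fixes F :: "('d::finite) site \<Rightarrow> real"
  shows "(\<Sum>e\<in>unit_sites. F e) = (\<Sum>i\<in>UNIV. F (unitvec i) + F (\<lambda>j. - unitvec i j))"
proof -
  have U: "unit_sites = range unitvec \<union> range (\<lambda>i j. - unitvec i j)"
    using unit_sites_char by auto
  have inj1: "inj (unitvec :: 'd \<Rightarrow> 'd site)"
    by (rule injI) (auto simp: unitvec_def fun_eq_iff split: if_splits)
  have inj2: "inj (\<lambda>(i::'d) j. - unitvec i j)"
    by (rule injI) (auto simp: unitvec_def fun_eq_iff split: if_splits)
  have disj: "range unitvec \<inter> range (\<lambda>(i::'d) j. - unitvec i j) = {}"
    by (auto simp: unitvec_def fun_eq_iff split: if_splits)
  have "(\<Sum>e\<in>unit_sites. F e) = (\<Sum>e\<in>range unitvec. F e) + (\<Sum>e\<in>range (\<lambda>(i::'d) j. - unitvec i j). F e)"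
    unfolding U by (rule sum.union_disjoint) (use disj in auto)
  also have "\<dots> = (\<Sum>i\<in>UNIV. F (unitvec i)) + (\<Sum>i\<in>UNIV. F (\<lambda>j. - unitvec i j))"
    by (simp add: sum.reindex[OF inj1] sum.reindex[OF inj2])
  also have "\<dots> = (\<Sum>i\<in>UNIV. F (unitvec i) + F (\<lambda>j. - unitvec i j))"
    by (simp add: sum.distrib)
  finally show ?thesis .
qed

lemma envsp_ne: "(\<lambda>x i. 1) \<in> envsp"
  by (simp add: envsp_def pos_diag_def)

lemma int_abs_le:
  fixes h :: "'a \<Rightarrow> real" and C :: real
  assumes "prob_space Q" "h \<in> borel_measurable Q" "\<And>\<omega>. \<omega> \<in> space Q \<Longrightarrow> \<bar>h \<omega>\<bar> \<le> C"
  shows "\<bar>\<integral>\<omega>. h \<omega> \<partial>Q\<bar> \<le> C"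
proof -
  interpret prob_space Q by fact
  have i: "integrable Q h"
    by (rule integrable_const_bound[where B=C]) (use assms in auto)
  have "\<bar>\<integral>\<omega>. h \<omega> \<partial>Q\<bar> \<le> (\<integral>\<omega>. \<bar>h \<omega>\<bar> \<partial>Q)" by (rule integral_abs_bound)
  also have "\<dots> \<le> (\<integral>\<omega>. C \<partial>Q)"
    by (rule integral_mono) (use i assms in auto)
  also have "\<dots> = C" by (simp add: prob_space)
  finally show ?thesis .
qed

lemma integ_b:
  fixes h :: "'a \<Rightarrow> real" and C :: real
  assumes "prob_space Q" "h \<in> borel_measurable Q" "\<And>\<omega>. \<omega> \<in> space Q \<Longrightarrow> \<bar>h \<omega>\<bar> \<le> C"
  shows "integrable Q h"
proof -
  interpret prob_space Q by fact
  show ?thesis by (rule integrable_const_bound[where B=C]) (use assms in auto)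
qed


lemma space_Q:
  fixes \<mu> :: "('d::finite \<Rightarrow> real) measure"
  assumes "sets \<mu> = sets (restrict_space borel pos_diag)" "sets Q = sets (env_measure \<mu>)"
  shows "space Q = envsp"
  using sets_eq_imp_space_eq[OF assms(2)] space_env[OF assms(1)] by simp

lemma meas_Q:
  fixes h :: "'a \<Rightarrow> real"
  assumes "sets Q = sets M" "h \<in> borel_measurable M"
  shows "h \<in> borel_measurable Q"
  using measurable_cong_sets[OF assms(1) refl, of "borel :: real measure"] assms(2) by simp

lemma sg_taylor0:
  assumes g: "\<And>\<omega>. \<omega> \<in> envsp \<Longrightarrow> \<bar>g \<omega>\<bar> \<le> B" and w: "\<omega> \<in> envsp" and s: "0 \<le> s" "s \<le> 1"
  shows "\<bar>semigroup s g \<omega> - g \<omega> - s * gen_env g \<omega>\<bar> \<le> (4 * B * exp 2) * s^2"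
proof -
  have g1: "\<And>\<omega>. \<omega> \<in> envsp \<Longrightarrow> \<bar>gen_env g \<omega>\<bar> \<le> 2 * B" by (rule gen_bound[OF g])
  have g2: "\<And>\<omega>. \<omega> \<in> envsp \<Longrightarrow> \<bar>gen_env (gen_env g) \<omega>\<bar> \<le> 2 * (2 * B)" by (rule gen_bound[OF g1])
  have B0: "0 \<le> B" using g[OF envsp_ne] by linarith
  have "\<bar>semigroup s g \<omega> - semigroup 0 g \<omega> - (s - 0) * semigroup 0 (gen_env g) \<omega>\<bar> \<le> (4 * B * exp 2) * (s - 0)^2"
  proof (rule taylor2[where a=0 and b=1])
    fix x
    show "((\<lambda>x. semigroup x g \<omega>) has_real_derivative semigroup x (gen_env g) \<omega>) (at x)"
      by (rule sg_deriv[OF g w])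
    show "((\<lambda>x. semigroup x (gen_env g) \<omega>) has_real_derivative semigroup x (gen_env (gen_env g)) \<omega>) (at x)"
      by (rule sg_deriv[OF g1 w])
    assume x: "0 \<le> x" "x \<le> 1"
    have "\<bar>semigroup x (gen_env (gen_env g)) \<omega>\<bar> \<le> 2 * (2 * B) * exp (2 * \<bar>x\<bar>)"
      by (rule sg_bound[OF g2 w])
    also have "\<dots> \<le> 2 * (2 * B) * exp 2"
      using x B0 by (intro mult_left_mono) auto
    finally show "\<bar>semigroup x (gen_env (gen_env g)) \<omega>\<bar> \<le> 4 * B * exp 2" by simp
  qed (use s in auto)
  then show ?thesis by (simp add: sg_zero)
qed

lemma gen_int_zero:
  fixes \<mu> :: "('d::finite \<Rightarrow> real) measure"
  assumes S: "sets \<mu> = sets (restrict_space borel pos_diag)"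
   and Q: "prob_space Q" "sets Q = sets (env_measure \<mu>)"
   and inv: "\<And>s. 0 \<le> s \<Longrightarrow> (\<integral>\<omega>. semigroup s g \<omega> \<partial>Q) = (\<integral>\<omega>. g \<omega> \<partial>Q)"
   and gm: "g \<in> borel_measurable (env_measure \<mu>)" and g: "\<And>\<omega>. \<omega> \<in> envsp \<Longrightarrow> \<bar>g \<omega>\<bar> \<le> B"
  shows "(\<integral>\<omega>. gen_env g \<omega> \<partial>Q) = 0"
proof -
  have spQ: "space Q = envsp" by (rule space_Q[OF S Q(2)])
  have B0: "0 \<le> B" using g[OF envsp_ne] by linarith
  define K where "K = 4 * B * exp 2"
  have K0: "0 \<le> K" using B0 by (simp add: K_def)
  have g1: "\<And>\<omega>. \<omega> \<in> envsp \<Longrightarrow> \<bar>gen_env g \<omega>\<bar> \<le> 2 * B" by (rule gen_bound[OF g])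
  have gQ: "g \<in> borel_measurable Q" by (rule meas_Q[OF Q(2) gm])
  have g1Q: "gen_env g \<in> borel_measurable Q" by (rule meas_Q[OF Q(2) gen_meas[OF S gm]])
  have main: "\<bar>\<integral>\<omega>. gen_env g \<omega> \<partial>Q\<bar> \<le> K * s" if s: "0 < s" "s \<le> 1" for s
  proof -
    have sQ: "semigroup s g \<in> borel_measurable Q" by (rule meas_Q[OF Q(2) sg_meas[OF S gm g]])
    have i1: "integrable Q (semigroup s g)"
      by (rule integ_b[OF Q(1) sQ]) (use sg_bound[OF g] spQ in auto)
    have i2: "integrable Q g" by (rule integ_b[OF Q(1) gQ]) (use g spQ in auto)
    have i3: "integrable Q (gen_env g)" by (rule integ_b[OF Q(1) g1Q]) (use g1 spQ in auto)
    have "(\<integral>\<omega>. semigroup s g \<omega> - g \<omega> - s * gen_env g \<omega> \<partial>Q)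
        = (\<integral>\<omega>. semigroup s g \<omega> \<partial>Q) - (\<integral>\<omega>. g \<omega> \<partial>Q) - s * (\<integral>\<omega>. gen_env g \<omega> \<partial>Q)"
      using i1 i2 i3 by simp
    also have "\<dots> = - s * (\<integral>\<omega>. gen_env g \<omega> \<partial>Q)" using inv[of s] s by simp
    finally have eq: "(\<integral>\<omega>. semigroup s g \<omega> - g \<omega> - s * gen_env g \<omega> \<partial>Q) = - s * (\<integral>\<omega>. gen_env g \<omega> \<partial>Q)" .
    have "\<bar>\<integral>\<omega>. semigroup s g \<omega> - g \<omega> - s * gen_env g \<omega> \<partial>Q\<bar> \<le> K * s^2"
    proof (rule int_abs_le[OF Q(1)])
      show "(\<lambda>\<omega>. semigroup s g \<omega> - g \<omega> - s * gen_env g \<omega>) \<in> borel_measurable Q"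
        using sQ gQ g1Q by measurable
      fix \<omega> assume "\<omega> \<in> space Q"
      then show "\<bar>semigroup s g \<omega> - g \<omega> - s * gen_env g \<omega>\<bar> \<le> K * s^2"
        using sg_taylor0[where g=g and B=B and \<omega>=\<omega> and s=s, OF g] s spQ unfolding K_def by auto
    qed
    then have "s * \<bar>\<integral>\<omega>. gen_env g \<omega> \<partial>Q\<bar> \<le> s * (K * s)"
      unfolding eq using s by (simp add: abs_mult power2_eq_square algebra_simps)
    then show ?thesis using s by simp
  qed
  show ?thesis
  proof (rule ccontr)
    assume ne: "(\<integral>\<omega>. gen_env g \<omega> \<partial>Q) \<noteq> 0"
    define c where "c = \<bar>\<integral>\<omega>. gen_env g \<omega> \<partial>Q\<bar>"
    have c0: "0 < c" using ne by (simp add: c_def)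
    define s where "s = min 1 (c / (2 * (K + 1)))"
    have s: "0 < s" "s \<le> 1" using c0 K0 by (auto simp: s_def)
    have "c \<le> K * s" using main[OF s] by (simp add: c_def)
    also have "\<dots> \<le> K * (c / (2 * (K + 1)))" using K0 by (intro mult_left_mono) (auto simp: s_def)
    also have "\<dots> < c" using c0 K0 by (simp add: field_simps add_nonneg_pos)
    finally show False by simp
  qed
qed


lemma sq_taylor:
  assumes B: "\<And>\<omega>. \<omega> \<in> envsp \<Longrightarrow> \<bar>\<zeta> \<omega>\<bar> \<le> B" and w: "\<omega> \<in> envsp"
    and m: "\<bar>m\<bar> \<le> B" and st: "\<bar>s - t\<bar> < 1"
  shows "\<bar>(semigroup s \<zeta> \<omega> - m)^2 - (semigroup t \<zeta> \<omega> - m)^2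
          - (s - t) * (2 * (semigroup t \<zeta> \<omega> - m) * semigroup t (gen_env \<zeta>) \<omega>)\<bar>
         \<le> (24 * B^2 * (exp (2 * (\<bar>t\<bar> + 1)))^2) * (s - t)^2"
proof -
  define E where "E = exp (2 * (\<bar>t\<bar> + 1))"
  have E1: "1 \<le> E" unfolding E_def by simp
  have B0: "0 \<le> B" using B[OF envsp_ne] by linarith
  have B1: "\<And>\<omega>. \<omega> \<in> envsp \<Longrightarrow> \<bar>gen_env \<zeta> \<omega>\<bar> \<le> 2 * B" by (rule gen_bound[OF B])
  have B2: "\<And>\<omega>. \<omega> \<in> envsp \<Longrightarrow> \<bar>gen_env (gen_env \<zeta>) \<omega>\<bar> \<le> 2 * (2 * B)" by (rule gen_bound[OF B1])
  let ?v = "\<lambda>x. semigroup x \<zeta> \<omega>" and ?w = "\<lambda>x. semigroup x (gen_env \<zeta>) \<omega>"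
    and ?z = "\<lambda>x. semigroup x (gen_env (gen_env \<zeta>)) \<omega>"
  have dv: "\<And>x. (?v has_real_derivative ?w x) (at x)" by (rule sg_deriv[OF B w])
  have dw: "\<And>x. (?w has_real_derivative ?z x) (at x)" by (rule sg_deriv[OF B1 w])
  have "\<bar>(?v s - m)^2 - (?v t - m)^2 - (s - t) * (2 * (?v t - m) * ?w t)\<bar> \<le> (24 * B^2 * E^2) * (s - t)^2"
  proof (rule taylor2[where a="t - 1" and b="t + 1"
        and f'="\<lambda>x. 2 * (?v x - m) * ?w x" and f''="\<lambda>x. 2 * (?w x * ?w x + (?v x - m) * ?z x)"])
    fix x
    show "((\<lambda>x. (?v x - m)^2) has_real_derivative 2 * (?v x - m) * ?w x) (at x)"
      unfolding power2_eq_square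
      by (rule derivative_eq_intros dv refl | simp)+
    show "((\<lambda>x. 2 * (?v x - m) * ?w x) has_real_derivative 2 * (?w x * ?w x + (?v x - m) * ?z x)) (at x)"
      by (rule derivative_eq_intros dv dw refl | simp add: algebra_simps)+
    assume x: "t - 1 \<le> x" "x \<le> t + 1"
    have ex: "exp (2 * \<bar>x\<bar>) \<le> E" unfolding E_def using x by auto
    have bw: "\<bar>?w x\<bar> \<le> 2 * B * E"
    proof -
      have "2 * B * exp (2 * \<bar>x\<bar>) \<le> 2 * B * E" using ex B0 by (intro mult_left_mono) auto
      then show ?thesis using sg_bound[where f="gen_env \<zeta>" and B="2*B" and s=x, OF B1 w] by linarith
    qed
    have bz: "\<bar>?z x\<bar> \<le> 4 * B * E"
    proof -
      have "4 * B * exp (2 * \<bar>x\<bar>) \<le> 4 * B * E" using ex B0 by (intro mult_left_mono) auto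
      then show ?thesis using sg_bound[where f="gen_env (gen_env \<zeta>)" and B="2*(2*B)" and s=x, OF B2 w] by linarith
    qed
    have bv0: "\<bar>?v x\<bar> \<le> B * E"
    proof -
      have "B * exp (2 * \<bar>x\<bar>) \<le> B * E" using ex B0 by (intro mult_left_mono) auto
      then show ?thesis using sg_bound[where f="\<zeta>" and B="B" and s=x, OF B w] by linarith
    qed
    have "B * 1 \<le> B * E" using E1 B0 by (intro mult_left_mono) auto
    then have bv: "\<bar>?v x - m\<bar> \<le> 2 * B * E"
      using bv0 m by linarith
    have "\<bar>?w x * ?w x\<bar> \<le> (2 * B * E) * (2 * B * E)"
      unfolding abs_mult by (rule mult_mono[OF bw bw]) (use B0 E1 in auto)
    moreover have "\<bar>(?v x - m) * ?z x\<bar> \<le> (2 * B * E) * (4 * B * E)"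
      unfolding abs_mult by (rule mult_mono[OF bv bz]) (use B0 E1 in auto)
    moreover have "\<And>a b A C::real. \<bar>a\<bar> \<le> A \<Longrightarrow> \<bar>b\<bar> \<le> C \<Longrightarrow> \<bar>2 * (a + b)\<bar> \<le> 2 * (A + C)" by (simp add: abs_le_iff)
    ultimately have "\<bar>2 * (?w x * ?w x + (?v x - m) * ?z x)\<bar> \<le> 2 * ((2 * B * E) * (2 * B * E) + (2 * B * E) * (4 * B * E))"
      by blast
    also have "\<dots> = 24 * B^2 * E^2" by (simp add: power2_eq_square algebra_simps)
    finally show "\<bar>2 * (?w x * ?w x + (?v x - m) * ?z x)\<bar> \<le> 24 * B^2 * E^2" .
  qed (use st in auto)
  then show ?thesis unfolding E_def .
qed


lemma dirichlet_pt:
  "2 * u \<omega> * gen_env u \<omega> = gen_env (\<lambda>\<omega>. (u \<omega>)^2) \<omega>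
     - (\<Sum>i\<in>UNIV. \<omega> origin i / (2 * tr (\<omega> origin)) *
          ((u (shift (unitvec i) \<omega>) - u \<omega>)^2 + (u (shift (\<lambda>j. - unitvec i j) \<omega>) - u \<omega>)^2))"
  unfolding gen_env_def sum_distrib_left sum_subtractf[symmetric]
  by (intro sum.cong refl) (simp add: power2_eq_square algebra_simps)

lemma gen_const: "gen_env (\<lambda>\<omega>. f \<omega> - m) \<omega> = gen_env f \<omega>"
  unfolding gen_env_def by (intro sum.cong refl) (simp add: algebra_simps)




lemma sq_le: "\<bar>a::real\<bar> \<le> A \<Longrightarrow> \<bar>a^2\<bar> \<le> A^2"
proof -
  assume "\<bar>a\<bar> \<le> A"
  then have "\<bar>a\<bar>^2 \<le> A^2" by (intro power_mono) auto
  then show ?thesis by simp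
qed

theorem lemma3p2:
  fixes \<kappa> :: real
  assumes "0 < \<kappa>" and "\<kappa> \<le> 1 / (2 * real CARD('d::finite))"
  shows "\<exists>C>0. \<forall>(\<mu>::('d \<Rightarrow> real) measure) Q \<zeta> t.
     prob_space \<mu> \<and> sets \<mu> = sets (restrict_space borel pos_diag) \<and>
     (AE \<omega> in env_measure \<mu>. \<forall>x i. 2 * \<kappa> \<le> \<omega> x i / tr (\<omega> x)) \<and>
     invariant_ergodic_equiv (env_measure \<mu>) Q \<and>
     \<zeta> \<in> borel_measurable (env_measure \<mu>) \<and> bounded_fun (env_measure \<mu>) \<zeta> \<and> 0 \<le> t
     \<longrightarrow> (\<exists>D. ((\<lambda>s. \<integral>\<omega>. (semigroup s \<zeta> \<omega> - (\<integral>\<omega>'. semigroup s \<zeta> \<omega>' \<partial>Q))^2 \<partial>Q)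
                 has_real_derivative D) (at t within {0..}) \<and>
             D \<le> - C * (\<Sum>e\<in>unit_sites. \<integral>\<omega>. (semigroup t \<zeta> (shift e \<omega>) - semigroup t \<zeta> \<omega>)^2 \<partial>Q))"
proof (rule exI[of _ \<kappa>], intro conjI allI impI)
  show "0 < \<kappa>" by fact
  fix \<mu> :: "('d \<Rightarrow> real) measure" and Q :: "'d env measure" and \<zeta> :: "'d env \<Rightarrow> real" and t :: real
  assume H: "prob_space \<mu> \<and> sets \<mu> = sets (restrict_space borel pos_diag) \<and>
     (AE \<omega> in env_measure \<mu>. \<forall>x i. 2 * \<kappa> \<le> \<omega> x i / tr (\<omega> x)) \<and>
     invariant_ergodic_equiv (env_measure \<mu>) Q \<and>
     \<zeta> \<in> borel_measurable (env_measure \<mu>) \<and> bounded_fun (env_measure \<mu>) \<zeta> \<and> 0 \<le> t"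
  then have S: "sets \<mu> = sets (restrict_space borel pos_diag)"
    and AEk: "AE \<omega> in env_measure \<mu>. \<forall>x i. 2 * \<kappa> \<le> \<omega> x i / tr (\<omega> x)"
    and IE: "invariant_ergodic_equiv (env_measure \<mu>) Q"
    and \<zeta>m: "\<zeta> \<in> borel_measurable (env_measure \<mu>)"
    and \<zeta>b: "bounded_fun (env_measure \<mu>) \<zeta>" and t0: "0 \<le> t" by auto
  define M where "M = env_measure \<mu>"
  have Qp: "prob_space Q" and QS: "sets Q = sets M" and ac: "absolutely_continuous M Q"
    and inv: "\<And>f s. f \<in> borel_measurable Q \<Longrightarrow> bounded_fun Q f \<Longrightarrow> 0 \<le> s \<Longrightarrow>
          (\<integral>\<omega>. semigroup s f \<omega> \<partial>Q) = (\<integral>\<omega>. f \<omega> \<partial>Q)"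
    using IE unfolding invariant_ergodic_equiv_def M_def by auto
  have spQ: "space Q = envsp" using space_Q[OF S] QS unfolding M_def by simp
  have spM: "space M = envsp" using space_env[OF S] unfolding M_def by simp
  obtain B where B: "\<And>\<omega>. \<omega> \<in> envsp \<Longrightarrow> \<bar>\<zeta> \<omega>\<bar> \<le> B"
    using \<zeta>b spM unfolding bounded_fun_def M_def by auto
  have B0: "0 \<le> B" using B[OF envsp_ne] by linarith
  have mQ: "\<And>h::'d env \<Rightarrow> real. h \<in> borel_measurable M \<Longrightarrow> h \<in> borel_measurable Q"
    using meas_Q[OF QS] by blast
  have invh: "\<And>(f::'d env \<Rightarrow> real) (Bf::real) (s::real). f \<in> borel_measurable M \<Longrightarrow> (\<And>\<omega>. \<omega> \<in> envsp \<Longrightarrow> \<bar>f \<omega>\<bar> \<le> Bf) \<Longrightarrow> 0 \<le> s \<Longrightarrow>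
      (\<integral>\<omega>. semigroup s f \<omega> \<partial>Q) = (\<integral>\<omega>. f \<omega> \<partial>Q)"
  proof -
    fix f :: "'d env \<Rightarrow> real" and Bf s :: real assume a: "f \<in> borel_measurable M" "\<And>\<omega>. \<omega> \<in> envsp \<Longrightarrow> \<bar>f \<omega>\<bar> \<le> Bf" "0 \<le> s"
    show "(\<integral>\<omega>. semigroup s f \<omega> \<partial>Q) = (\<integral>\<omega>. f \<omega> \<partial>Q)"
    proof (rule inv)
      show "f \<in> borel_measurable Q" by (rule mQ[OF a(1)])
      show "bounded_fun Q f" unfolding bounded_fun_def spQ using a(2) by blast
      show "0 \<le> s" by (rule a(3))
    qed
  qed
  have \<zeta>M: "\<zeta> \<in> borel_measurable M" using \<zeta>m unfolding M_def .
  define m where "m = (\<integral>\<omega>. \<zeta> \<omega> \<partial>Q)"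
  have mB: "\<bar>m\<bar> \<le> B" unfolding m_def
    by (rule int_abs_le[OF Qp mQ[OF \<zeta>M]]) (use B spQ in auto)
  have vm: "\<And>s. 0 \<le> s \<Longrightarrow> (\<integral>\<omega>. semigroup s \<zeta> \<omega> \<partial>Q) = m"
    unfolding m_def by (rule invh[OF \<zeta>M B])
  have S': "sets \<mu> = sets (restrict_space borel pos_diag)" by (rule S)
  have B1: "\<And>\<omega>. \<omega> \<in> envsp \<Longrightarrow> \<bar>gen_env \<zeta> \<omega>\<bar> \<le> 2 * B" by (rule gen_bound[OF B])
  have vM: "\<And>s. semigroup s \<zeta> \<in> borel_measurable M"
    unfolding M_def by (rule sg_meas[OF S \<zeta>m B])
  have wM: "\<And>s. semigroup s (gen_env \<zeta>) \<in> borel_measurable M"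
    unfolding M_def by (rule sg_meas[OF S gen_meas[OF S \<zeta>m] B1])
  have vB: "\<And>s \<omega>. \<omega> \<in> envsp \<Longrightarrow> \<bar>semigroup s \<zeta> \<omega>\<bar> \<le> B * exp (2 * \<bar>s\<bar>)"
    by (rule sg_bound[OF B])
  have wB: "\<And>s \<omega>. \<omega> \<in> envsp \<Longrightarrow> \<bar>semigroup s (gen_env \<zeta>) \<omega>\<bar> \<le> 2 * B * exp (2 * \<bar>s\<bar>)"
    by (rule sg_bound[OF B1])
  define K where "K = 24 * B^2 * (exp (2 * (\<bar>t\<bar> + 1)))^2"
  define D0 where "D0 = (\<integral>\<omega>. 2 * (semigroup t \<zeta> \<omega> - m) * semigroup t (gen_env \<zeta>) \<omega> \<partial>Q)"
  define Var where "Var = (\<lambda>s. \<integral>\<omega>. (semigroup s \<zeta> \<omega> - (\<integral>\<omega>'. semigroup s \<zeta> \<omega>' \<partial>Q))^2 \<partial>Q)"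
  have quad: "\<bar>Var s - Var t - (s - t) * D0\<bar> \<le> K * (s - t)^2" if s: "s \<in> {0..}" "\<bar>s - t\<bar> < 1" for s
  proof -
    have Vs: "Var s = (\<integral>\<omega>. (semigroup s \<zeta> \<omega> - m)^2 \<partial>Q)" using vm s unfolding Var_def by simp
    have Vt: "Var t = (\<integral>\<omega>. (semigroup t \<zeta> \<omega> - m)^2 \<partial>Q)" using vm t0 unfolding Var_def by simp
    have i1: "integrable Q (\<lambda>\<omega>. (semigroup s \<zeta> \<omega> - m)^2)"
    proof (rule integ_b[OF Qp])
      show "(\<lambda>\<omega>. (semigroup s \<zeta> \<omega> - m)^2) \<in> borel_measurable Q" using mQ[OF vM] by measurable
      fix \<omega> assume "\<omega> \<in> space Q"
      then have "\<bar>semigroup s \<zeta> \<omega> - m\<bar> \<le> B * exp (2 * \<bar>s\<bar>) + B" using vB[of \<omega> s] mB spQ by auto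
      then show "\<bar>(semigroup s \<zeta> \<omega> - m)^2\<bar> \<le> (B * exp (2 * \<bar>s\<bar>) + B)^2" by (rule sq_le)
    qed
    have i2: "integrable Q (\<lambda>\<omega>. (semigroup t \<zeta> \<omega> - m)^2)"
    proof (rule integ_b[OF Qp])
      show "(\<lambda>\<omega>. (semigroup t \<zeta> \<omega> - m)^2) \<in> borel_measurable Q" using mQ[OF vM] by measurable
      fix \<omega> assume "\<omega> \<in> space Q"
      then have "\<bar>semigroup t \<zeta> \<omega> - m\<bar> \<le> B * exp (2 * \<bar>t\<bar>) + B" using vB[of \<omega> t] mB spQ by auto
      then show "\<bar>(semigroup t \<zeta> \<omega> - m)^2\<bar> \<le> (B * exp (2 * \<bar>t\<bar>) + B)^2" by (rule sq_le)
    qed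
    have i3: "integrable Q (\<lambda>\<omega>. 2 * (semigroup t \<zeta> \<omega> - m) * semigroup t (gen_env \<zeta>) \<omega>)"
    proof (rule integ_b[OF Qp])
      show "(\<lambda>\<omega>. 2 * (semigroup t \<zeta> \<omega> - m) * semigroup t (gen_env \<zeta>) \<omega>) \<in> borel_measurable Q"
        using mQ[OF vM] mQ[OF wM] by measurable
      fix \<omega> assume "\<omega> \<in> space Q"
      then have a: "\<bar>semigroup t \<zeta> \<omega> - m\<bar> \<le> B * exp (2 * \<bar>t\<bar>) + B" and b: "\<bar>semigroup t (gen_env \<zeta>) \<omega>\<bar> \<le> 2 * B * exp (2 * \<bar>t\<bar>)"
        using vB[of \<omega> t] wB[of \<omega> t] mB spQ by auto
      have "\<bar>semigroup t \<zeta> \<omega> - m\<bar> * \<bar>semigroup t (gen_env \<zeta>) \<omega>\<bar> \<le> (B * exp (2 * \<bar>t\<bar>) + B) * (2 * B * exp (2 * \<bar>t\<bar>))"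
        by (rule mult_mono[OF a b]) (use B0 in auto)
      moreover have "\<bar>2 * (semigroup t \<zeta> \<omega> - m) * semigroup t (gen_env \<zeta>) \<omega>\<bar> = 2 * (\<bar>semigroup t \<zeta> \<omega> - m\<bar> * \<bar>semigroup t (gen_env \<zeta>) \<omega>\<bar>)"
        by (simp only: abs_mult abs_numeral mult.assoc)
      ultimately show "\<bar>2 * (semigroup t \<zeta> \<omega> - m) * semigroup t (gen_env \<zeta>) \<omega>\<bar> \<le> 2 * ((B * exp (2 * \<bar>t\<bar>) + B) * (2 * B * exp (2 * \<bar>t\<bar>)))"
        by linarith
    qed
    have "Var s - Var t - (s - t) * D0 = (\<integral>\<omega>. (semigroup s \<zeta> \<omega> - m)^2 - (semigroup t \<zeta> \<omega> - m)^2
          - (s - t) * (2 * (semigroup t \<zeta> \<omega> - m) * semigroup t (gen_env \<zeta>) \<omega>) \<partial>Q)"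
      unfolding Vs Vt D0_def using i1 i2 i3 by simp
    also have "\<bar>\<dots>\<bar> \<le> K * (s - t)^2"
    proof (rule int_abs_le[OF Qp])
      show "(\<lambda>\<omega>. (semigroup s \<zeta> \<omega> - m)^2 - (semigroup t \<zeta> \<omega> - m)^2
          - (s - t) * (2 * (semigroup t \<zeta> \<omega> - m) * semigroup t (gen_env \<zeta>) \<omega>)) \<in> borel_measurable Q"
        using mQ[OF vM] mQ[OF wM] by measurable
      fix \<omega> assume "\<omega> \<in> space Q"
      then show "\<bar>(semigroup s \<zeta> \<omega> - m)^2 - (semigroup t \<zeta> \<omega> - m)^2
          - (s - t) * (2 * (semigroup t \<zeta> \<omega> - m) * semigroup t (gen_env \<zeta>) \<omega>)\<bar> \<le> K * (s - t)^2"
        unfolding K_def using sq_taylor[where \<zeta>=\<zeta> and B=B and \<omega>=\<omega> and m=m and s=s and t=t, OF B _ mB s(2)] spQ by auto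
    qed
    finally show ?thesis .
  qed
  have deriv: "(Var has_real_derivative D0) (at t within {0..})"
    by (rule deriv_from_quad[where K=K]) (rule quad)
  show "\<exists>D. ((\<lambda>s. \<integral>\<omega>. (semigroup s \<zeta> \<omega> - (\<integral>\<omega>'. semigroup s \<zeta> \<omega>' \<partial>Q))^2 \<partial>Q)
                 has_real_derivative D) (at t within {0..}) \<and>
             D \<le> - \<kappa> * (\<Sum>e\<in>unit_sites. \<integral>\<omega>. (semigroup t \<zeta> (shift e \<omega>) - semigroup t \<zeta> \<omega>)^2 \<partial>Q)"
  proof (intro exI[of _ D0] conjI)
    show "((\<lambda>s. \<integral>\<omega>. (semigroup s \<zeta> \<omega> - (\<integral>\<omega>'. semigroup s \<zeta> \<omega>' \<partial>Q))^2 \<partial>Q)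
                 has_real_derivative D0) (at t within {0..})" using deriv unfolding Var_def .
    show "D0 \<le> - \<kappa> * (\<Sum>e\<in>unit_sites. \<integral>\<omega>. (semigroup t \<zeta> (shift e \<omega>) - semigroup t \<zeta> \<omega>)^2 \<partial>Q)"
    proof -
      have QS': "sets Q = sets (env_measure \<mu>)" using QS unfolding M_def .
      define u where "u = (\<lambda>\<omega>. semigroup t \<zeta> \<omega> - m)"
      define Bu where "Bu = B * exp (2 * \<bar>t\<bar>) + B"
      have Bu0: "0 \<le> Bu" using B0 by (simp add: Bu_def)
      have uM: "u \<in> borel_measurable M" unfolding u_def using vM by measurable
      have uB: "\<And>\<omega>. \<omega> \<in> envsp \<Longrightarrow> \<bar>u \<omega>\<bar> \<le> Bu"
      proof -
        fix \<omega> :: "'d env" assume w: "\<omega> \<in> envsp"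
        show "\<bar>u \<omega>\<bar> \<le> Bu"
          using abs_triangle_ineq4[of "semigroup t \<zeta> \<omega>" m] vB[OF w, of t] mB
          unfolding u_def Bu_def by linarith
      qed
      have u2M: "(\<lambda>\<omega>. (u \<omega>)^2) \<in> borel_measurable M" using uM by measurable
      have u2B: "\<And>\<omega>. \<omega> \<in> envsp \<Longrightarrow> \<bar>(u \<omega>)^2\<bar> \<le> Bu^2" using uB sq_le by blast
      have Lu2: "(\<integral>\<omega>. gen_env (\<lambda>\<omega>. (u \<omega>)^2) \<omega> \<partial>Q) = 0"
      proof (rule gen_int_zero[OF S Qp QS'])
        show "\<And>s. 0 \<le> s \<Longrightarrow> (\<integral>\<omega>. semigroup s (\<lambda>\<omega>. (u \<omega>)^2) \<omega> \<partial>Q) = (\<integral>\<omega>. (u \<omega>)^2 \<partial>Q)"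
          using invh[OF u2M u2B] by blast
        show "(\<lambda>\<omega>. (u \<omega>)^2) \<in> borel_measurable (env_measure \<mu>)" using u2M unfolding M_def .
        show "\<And>\<omega>. \<omega> \<in> envsp \<Longrightarrow> \<bar>(u \<omega>)^2\<bar> \<le> Bu^2" by (rule u2B)
      qed
      have wt: "\<And>\<omega>. \<omega> \<in> envsp \<Longrightarrow> semigroup t (gen_env \<zeta>) \<omega> = gen_env u \<omega>"
      proof -
        fix \<omega> :: "'d env" assume w: "\<omega> \<in> envsp"
        have "gen_env u \<omega> = gen_env (semigroup t \<zeta>) \<omega>" unfolding u_def by (rule gen_const)
        also have "\<dots> = semigroup t (gen_env \<zeta>) \<omega>"
          by (rule sg_commute[where f=\<zeta> and B=B, OF B w])
        finally show "semigroup t (gen_env \<zeta>) \<omega> = gen_env u \<omega>" by simp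
      qed
      define G where "G = gen_env (\<lambda>\<omega>. (u \<omega>)^2)"
      define R where "R = (\<lambda>\<omega>. \<Sum>i\<in>UNIV. \<omega> origin i / (2 * tr (\<omega> origin)) *
          ((u (shift (unitvec i) \<omega>) - u \<omega>)^2 + (u (shift (\<lambda>j. - unitvec i j) \<omega>) - u \<omega>)^2))"
      have Req: "\<And>\<omega>. R \<omega> = G \<omega> - 2 * u \<omega> * gen_env u \<omega>"
        unfolding R_def G_def using dirichlet_pt[of u] by (simp add: algebra_simps)
      have GM: "G \<in> borel_measurable M" unfolding G_def M_def by (rule gen_meas[OF S u2M[unfolded M_def]])
      have LuM: "gen_env u \<in> borel_measurable M" unfolding M_def by (rule gen_meas[OF S uM[unfolded M_def]])
      have GB: "\<And>\<omega>. \<omega> \<in> envsp \<Longrightarrow> \<bar>G \<omega>\<bar> \<le> 2 * Bu^2" unfolding G_def by (rule gen_bound[OF u2B])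
      have LuB: "\<And>\<omega>. \<omega> \<in> envsp \<Longrightarrow> \<bar>gen_env u \<omega>\<bar> \<le> 2 * Bu" by (rule gen_bound[OF uB])
      have uLuB: "\<And>\<omega>. \<omega> \<in> envsp \<Longrightarrow> \<bar>2 * u \<omega> * gen_env u \<omega>\<bar> \<le> 2 * (Bu * (2 * Bu))"
      proof -
        fix \<omega> :: "'d env" assume w: "\<omega> \<in> envsp"
        have "\<bar>u \<omega>\<bar> * \<bar>gen_env u \<omega>\<bar> \<le> Bu * (2 * Bu)"
          by (rule mult_mono[OF uB[OF w] LuB[OF w]]) (use Bu0 in auto)
        moreover have "\<bar>2 * u \<omega> * gen_env u \<omega>\<bar> = 2 * (\<bar>u \<omega>\<bar> * \<bar>gen_env u \<omega>\<bar>)"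
          by (simp only: abs_mult abs_numeral mult.assoc)
        ultimately show "\<bar>2 * u \<omega> * gen_env u \<omega>\<bar> \<le> 2 * (Bu * (2 * Bu))" by linarith
      qed
      have RM: "R \<in> borel_measurable M"
      proof -
        have "R = (\<lambda>\<omega>. G \<omega> - 2 * u \<omega> * gen_env u \<omega>)" using Req by (intro ext)
        then show ?thesis using GM uM LuM by simp
      qed
      have iR: "integrable Q R"
      proof (rule integ_b[OF Qp mQ[OF RM]])
        fix \<omega> assume "\<omega> \<in> space Q"
        then have w: "\<omega> \<in> envsp" using spQ by simp
        show "\<bar>R \<omega>\<bar> \<le> 2 * Bu^2 + 2 * (Bu * (2 * Bu))"
          using Req[of \<omega>] GB[OF w] uLuB[OF w] by linarith
      qed
      have iG: "integrable Q G"
        by (rule integ_b[OF Qp mQ[OF GM]]) (use GB spQ in auto)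
      have "D0 = (\<integral>\<omega>. 2 * u \<omega> * gen_env u \<omega> \<partial>Q)"
        unfolding D0_def
      proof (intro Bochner_Integration.integral_cong refl)
        fix \<omega> assume "\<omega> \<in> space Q"
        then have w: "\<omega> \<in> envsp" using spQ by simp
        show "2 * (semigroup t \<zeta> \<omega> - m) * semigroup t (gen_env \<zeta>) \<omega> = 2 * u \<omega> * gen_env u \<omega>"
          using wt[OF w] unfolding u_def by simp
      qed
      also have "\<dots> = (\<integral>\<omega>. G \<omega> - R \<omega> \<partial>Q)" using Req by simp
      also have "\<dots> = (\<integral>\<omega>. G \<omega> \<partial>Q) - (\<integral>\<omega>. R \<omega> \<partial>Q)" using iG iR by simp
      also have "\<dots> = - (\<integral>\<omega>. R \<omega> \<partial>Q)" using Lu2 unfolding G_def by simp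
      finally have D0eq: "D0 = - (\<integral>\<omega>. R \<omega> \<partial>Q)" .
      define F where "F = (\<lambda>e \<omega>. (semigroup t \<zeta> (shift e \<omega>) - semigroup t \<zeta> \<omega>)^2)"
      have FM: "\<And>e. F e \<in> borel_measurable M"
      proof -
        fix e :: "'d site"
        have a: "(\<lambda>\<omega>. semigroup t \<zeta> (shift e \<omega>)) \<in> borel_measurable M"
          using measurable_compose[OF shift_meas[OF S, of e] vM[unfolded M_def, of t]] unfolding M_def by simp
        show "F e \<in> borel_measurable M" unfolding F_def using a vM by measurable
      qed
      have iF: "\<And>e. integrable Q (F e)"
      proof -
        fix e :: "'d site"
        show "integrable Q (F e)"
        proof (rule integ_b[OF Qp mQ[OF FM]])
          fix \<omega> assume "\<omega> \<in> space Q"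
          then have w: "\<omega> \<in> envsp" using spQ by simp
          have "\<bar>semigroup t \<zeta> (shift e \<omega>) - semigroup t \<zeta> \<omega>\<bar> \<le> 2 * (B * exp (2 * \<bar>t\<bar>))"
            using vB[OF shift_envsp[OF w, of e], of t] vB[OF w, of t] by linarith
          then show "\<bar>F e \<omega>\<bar> \<le> (2 * (B * exp (2 * \<bar>t\<bar>)))^2" unfolding F_def by (rule sq_le)
        qed
      qed
      have AEM: "AE \<omega> in M. \<forall>x i. 2 * \<kappa> \<le> \<omega> x i / tr (\<omega> x)" using AEk unfolding M_def .
      have AEQ: "AE \<omega> in Q. \<forall>x i. 2 * \<kappa> \<le> \<omega> x i / tr (\<omega> x)"
        by (rule absolutely_continuous_AE[OF QS ac AEM])
      have AE2: "AE \<omega> in Q. \<kappa> * (\<Sum>e\<in>unit_sites. F e \<omega>) \<le> R \<omega>"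
        using AEQ AE_space
      proof eventually_elim
        case (elim \<omega>)
        then have w: "\<omega> \<in> envsp" and k: "\<And>i. 2 * \<kappa> \<le> \<omega> origin i / tr (\<omega> origin)" using spQ by auto
        have Fu: "\<And>e. F e \<omega> = (u (shift e \<omega>) - u \<omega>)^2" unfolding F_def u_def by simp
        have "\<kappa> * (\<Sum>e\<in>unit_sites. F e \<omega>) = (\<Sum>i\<in>UNIV. \<kappa> * ((u (shift (unitvec i) \<omega>) - u \<omega>)^2 + (u (shift (\<lambda>j. - unitvec i j) \<omega>) - u \<omega>)^2))"
          unfolding sum_unit_sites Fu sum_distrib_left ..
        also have "\<dots> \<le> R \<omega>" unfolding R_def
        proof (rule sum_mono)
          fix i
          have "\<kappa> \<le> \<omega> origin i / (2 * tr (\<omega> origin))" using k[of i] by simp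
          then show "\<kappa> * ((u (shift (unitvec i) \<omega>) - u \<omega>)^2 + (u (shift (\<lambda>j. - unitvec i j) \<omega>) - u \<omega>)^2)
              \<le> \<omega> origin i / (2 * tr (\<omega> origin)) * ((u (shift (unitvec i) \<omega>) - u \<omega>)^2 + (u (shift (\<lambda>j. - unitvec i j) \<omega>) - u \<omega>)^2)"
            by (rule mult_right_mono) simp
        qed
        finally show ?case .
      qed
      have "\<kappa> * (\<Sum>e\<in>unit_sites. \<integral>\<omega>. F e \<omega> \<partial>Q) = (\<integral>\<omega>. \<kappa> * (\<Sum>e\<in>unit_sites. F e \<omega>) \<partial>Q)"
        using iF by (simp add: integral_sum)
      also have "\<dots> \<le> (\<integral>\<omega>. R \<omega> \<partial>Q)"
        by (rule integral_mono_AE[OF _ iR AE2]) (use iF in simp)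
      finally have "\<kappa> * (\<Sum>e\<in>unit_sites. \<integral>\<omega>. F e \<omega> \<partial>Q) \<le> (\<integral>\<omega>. R \<omega> \<partial>Q)" .
      then show ?thesis unfolding D0eq F_def by simp
    qed
  qed
qed

end
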